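(* Let $A,B\in\mathcal{F}_2$ be commonly ordered configurations of two robots. There exists a feasible schedule $M$ from $A$ to $B$ with $\Sigma(M)=\sum_{i=1}^2\|a_i-b_i\|$ in which each robot makes at most one turn.
   Context: Robots are axis-parallel unit squares: a robot at $p$ occupies $p+\boxdot$, $\boxdot=\{q:\|q\|_\infty\le1/2\}$. Distances use the $L_1$ norm $\|p\|=|x(p)|+|y(p)|$. A configuration of two robots is a pair $(p_1,p_2)$ with $\|p_1-p_2\|_\infty\ge 1$; $\mathcal{F}_2$ is their set. A trajectory from $a$ to $b$ over $T=[t_0,t_1]$ is a $1$-Lipschitz (w.r.t. $L_1$) map $m:T\to\mathbb{R}^2$, $m(t_0)=a$, $m(t_1)=b$, whose image is a polygonal chain; a turn is a point of the image where two segments of different orientations meet. A schedule $M=(m_1,m_2)$ is feasible if $M(t)\in\mathcal{F}_2$ for all $t$; $\Sigma(M)$ is the sum of the lengths of the chains. The four orderings are $\mathcal{F}_2^{\rightarrow}=\{(p_1,p_2)\in\mathcal{F}_2: x(p_1)\ge x(p_2)+1\}$, $\mathcal{F}_2^{\leftarrow}=\{x(p_2)\ge x(p_1)+1\}$, $\mathcal{F}_2^{\uparrow}=\{y(p_1)\ge y(p_2)+1\}$, $\mathcal{F}_2^{\downarrow}=\{y(p_2)\ge y(p_1)+1\}$. Two configurations are commonly ordered if both lie in the same ordering. *)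

theory Defs
  imports "HOL-Analysis.Analysis"
begin

type_synonym pt = "real \<times> real"

definition l1dist :: "pt \<Rightarrow> pt \<Rightarrow> real" where
  "l1dist p q = \<bar>fst p - fst q\<bar> + \<bar>snd p - snd q\<bar>"

definition linfdist :: "pt \<Rightarrow> pt \<Rightarrow> real" where
  "linfdist p q = max \<bar>fst p - fst q\<bar> \<bar>snd p - snd q\<bar>"

definition F2 :: "(pt \<times> pt) set" where
  "F2 = {(p1, p2). linfdist p1 p2 \<ge> 1}"

definition F2_right :: "(pt \<times> pt) set" where
  "F2_right = {(p1, p2). (p1, p2) \<in> F2 \<and> fst p1 \<ge> fst p2 + 1}"
definition F2_left :: "(pt \<times> pt) set" where
  "F2_left = {(p1, p2). (p1, p2) \<in> F2 \<and> fst p2 \<ge> fst p1 + 1}"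
definition F2_up :: "(pt \<times> pt) set" where
  "F2_up = {(p1, p2). (p1, p2) \<in> F2 \<and> snd p1 \<ge> snd p2 + 1}"
definition F2_down :: "(pt \<times> pt) set" where
  "F2_down = {(p1, p2). (p1, p2) \<in> F2 \<and> snd p2 \<ge> snd p1 + 1}"

definition commonly_ordered :: "(pt \<times> pt) \<Rightarrow> (pt \<times> pt) \<Rightarrow> bool" where
  "commonly_ordered A B \<longleftrightarrow>
     (\<exists>S \<in> {F2_right, F2_left, F2_up, F2_down}. A \<in> S \<and> B \<in> S)"

fun chain_image :: "pt list \<Rightarrow> pt set" where
  "chain_image [] = {}"
| "chain_image [p] = {p}"
| "chain_image (p # q # r) = closed_segment p q \<union> chain_image (q # r)"

fun chain_len :: "pt list \<Rightarrow> real" where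
  "chain_len [] = 0"
| "chain_len [p] = 0"
| "chain_len (p # q # r) = l1dist p q + chain_len (q # r)"

definition different_orientation :: "pt \<Rightarrow> pt \<Rightarrow> pt \<Rightarrow> bool" where
  "different_orientation p q r \<longleftrightarrow>
     (fst q - fst p) * (snd r - snd q) \<noteq> (snd q - snd p) * (fst r - fst q)"

definition turns :: "pt list \<Rightarrow> nat" where
  "turns ps = card {i. 0 < i \<and> i + 1 < length ps \<and>
                       different_orientation (ps ! (i - 1)) (ps ! i) (ps ! (i + 1))}"

definition trajectory :: "(real \<Rightarrow> pt) \<Rightarrow> pt \<Rightarrow> pt \<Rightarrow> real \<Rightarrow> real \<Rightarrow> pt list \<Rightarrow> bool" where
  "trajectory m a b t0 t1 ps \<longleftrightarrow>
     t0 \<le> t1 \<and> m t0 = a \<and> m t1 = b \<and>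
     (\<forall>s\<in>{t0..t1}. \<forall>t\<in>{t0..t1}. l1dist (m s) (m t) \<le> \<bar>s - t\<bar>) \<and>
     ps \<noteq> [] \<and> hd ps = a \<and> last ps = b \<and>
     (\<forall>i. i + 1 < length ps \<longrightarrow> ps ! i \<noteq> ps ! (i + 1)) \<and>
     m ` {t0..t1} = chain_image ps"

definition feasible :: "(real \<Rightarrow> pt) \<Rightarrow> (real \<Rightarrow> pt) \<Rightarrow> real \<Rightarrow> real \<Rightarrow> bool" where
  "feasible m1 m2 t0 t1 \<longleftrightarrow> (\<forall>t\<in>{t0..t1}. (m1 t, m2 t) \<in> F2)"

end

theory Submission
  imports Defs
begin

definition lam :: "real \<Rightarrow> real \<Rightarrow> real \<Rightarrow> real" where
  "lam D s t = min 1 (max 0 ((t - s) / D))"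

lemma lam_0: "D > 0 \<Longrightarrow> t \<le> s \<Longrightarrow> lam D s t = 0"
  unfolding lam_def by (simp add: divide_nonpos_pos)

lemma lam_1: "D > 0 \<Longrightarrow> s + D \<le> t \<Longrightarrow> lam D s t = 1"
  unfolding lam_def by (simp add: field_simps)

lemma lam_bounds: "0 \<le> lam D s t" "lam D s t \<le> 1"
  unfolding lam_def by auto

lemma lam_at: "D > 0 \<Longrightarrow> 0 \<le> u \<Longrightarrow> u \<le> 1 \<Longrightarrow> lam D s (s + u * D) = u"
  unfolding lam_def by simp

lemma minmax_lip: "\<bar>min 1 (max 0 x) - min 1 (max 0 y)\<bar> \<le> \<bar>x - y\<bar>" for x y :: real
  by (simp add: abs_if min_def max_def)

lemma lam_lip: "D > 0 \<Longrightarrow> \<bar>lam D s t - lam D s t'\<bar> \<le> \<bar>t - t'\<bar> / D"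
proof -
  assume D: "D > 0"
  have "\<bar>lam D s t - lam D s t'\<bar> \<le> \<bar>(t - s) / D - (t' - s) / D\<bar>"
    unfolding lam_def by (rule minmax_lip)
  also have "\<dots> = \<bar>t - t'\<bar> / D"
    using D by (simp add: diff_divide_distrib[symmetric])
  finally show ?thesis .
qed

definition mv :: "pt \<Rightarrow> pt \<Rightarrow> real \<Rightarrow> real \<Rightarrow> real \<Rightarrow> real \<Rightarrow> pt" where
  "mv a b D sx sy t = (fst a + (fst b - fst a) * lam D sx t, snd a + (snd b - snd a) * lam D sy t)"

lemma chain3_len: "chain_len (remdups_adj [a, c, b]) = l1dist a c + l1dist c b"
  by (auto simp: l1dist_def)

lemma chain3_img: "chain_image (remdups_adj [a, c, b]) = closed_segment a c \<union> closed_segment c b"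
proof -
  have e: "b \<in> closed_segment c b" "c \<in> closed_segment c b" "a \<in> closed_segment a c" "c \<in> closed_segment a c"
    by (rule ends_in_segment)+
  consider "a = c" "c = b" | "a = c" "c \<noteq> b" | "a \<noteq> c" "c = b" | "a \<noteq> c" "c \<noteq> b" by blast
  then show ?thesis
  proof cases
    case 1
    then have r: "remdups_adj [a, c, b] = [a]" by simp
    show ?thesis unfolding r using 1 by simp
  next
    case 2
    then have r: "remdups_adj [a, c, b] = [c, b]" by simp
    show ?thesis unfolding r using 2 e by (simp only: chain_image.simps closed_segment_idem; blast)
  next
    case 3
    then have r: "remdups_adj [a, c, b] = [a, c]" by simp
    show ?thesis unfolding r using 3 e by (simp only: chain_image.simps closed_segment_idem; blast)
  next
    case 4
    then have r: "remdups_adj [a, c, b] = [a, c, b]" by simp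
    show ?thesis unfolding r using 4 e by (simp only: chain_image.simps closed_segment_idem; blast)
  qed
qed

lemma turns_le3: "length ps \<le> 3 \<Longrightarrow> turns ps \<le> 1"
proof -
  assume L: "length ps \<le> 3"
  let ?S = "{i. 0 < i \<and> i + 1 < length ps \<and>
        different_orientation (ps ! (i - 1)) (ps ! i) (ps ! (i + 1))}"
  have "?S \<subseteq> {1}"
  proof
    fix i assume "i \<in> ?S"
    then have "0 < i" "i + 1 < length ps" by simp_all
    with L show "i \<in> {1}" by simp
  qed
  then have "card ?S \<le> card {1::nat}" by (rule card_mono[rotated]) simp
  then show ?thesis unfolding turns_def by simp
qed

lemma chain3_turns: "turns (remdups_adj [a, c, b]) \<le> 1"
  by (rule turns_le3) (use remdups_adj_length[of "[a,c,b]"] in simp)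

lemma seg_param: "closed_segment (p::pt) q =
  {(fst p + u * (fst q - fst p), snd p + u * (snd q - snd p)) | u. 0 \<le> u \<and> u \<le> 1}"
proof -
  have e: "\<And>u. (1 - u) *\<^sub>R p + u *\<^sub>R q = (fst p + u * (fst q - fst p), snd p + u * (snd q - snd p))"
    by (simp add: prod_eq_iff algebra_simps)
  show ?thesis by (simp only: closed_segment_def e)
qed

lemma mv_lip:
  assumes D: "D > 0" "l1dist a b \<le> D"
  shows "l1dist (mv a b D sx sy s) (mv a b D sx sy t) \<le> \<bar>s - t\<bar>"
proof -
  let ?dx = "fst b - fst a" and ?dy = "snd b - snd a"
  have "l1dist (mv a b D sx sy s) (mv a b D sx sy t) =
        \<bar>?dx\<bar> * \<bar>lam D sx s - lam D sx t\<bar> + \<bar>?dy\<bar> * \<bar>lam D sy s - lam D sy t\<bar>"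
    unfolding l1dist_def mv_def by (simp add: abs_mult[symmetric] algebra_simps)
  also have "\<dots> \<le> \<bar>?dx\<bar> * (\<bar>s - t\<bar> / D) + \<bar>?dy\<bar> * (\<bar>s - t\<bar> / D)"
    by (intro add_mono mult_left_mono lam_lip D) auto
  also have "\<dots> = l1dist a b * \<bar>s - t\<bar> / D"
    using D unfolding l1dist_def by (simp add: field_simps abs_minus_commute)
  also have "\<dots> \<le> D * \<bar>s - t\<bar> / D"
    using D by (intro divide_right_mono mult_right_mono) auto
  also have "\<dots> = \<bar>s - t\<bar>" using D by simp
  finally show ?thesis .
qed

lemma traj_common:
  assumes "mm 0 = a" "mm T = b" "0 \<le> T"
    "\<And>s t. l1dist (mm s) (mm t) \<le> \<bar>s - t\<bar>"
    "mm ` {0..T} = closed_segment a c \<union> closed_segment c b"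
  shows "trajectory mm a b 0 T (remdups_adj [a, c, b])"
  unfolding trajectory_def using assms remdups_adj_adjacent[of _ "[a,c,b]"]
  by (simp add: chain3_img del: remdups_adj.simps)

lemma traj_yfirst:
  assumes D: "D > 0" "l1dist a b \<le> D" and s: "0 \<le> sy" "sy + D \<le> sx" "sx + D \<le> T"
  shows "trajectory (mv a b D sx sy) a b 0 T (remdups_adj [a, (fst a, snd b), b])"
proof (rule traj_common)
  show "mv a b D sx sy 0 = a" using D s by (simp add: mv_def lam_0)
  show "mv a b D sx sy T = b" using D s by (simp add: mv_def lam_1)
  show "0 \<le> T" using D s by simp
  show "l1dist (mv a b D sx sy s) (mv a b D sx sy t) \<le> \<bar>s - t\<bar>" for s t
    using mv_lip D by blast
  show "mv a b D sx sy ` {0..T} = closed_segment a (fst a, snd b) \<union> closed_segment (fst a, snd b) b"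
  proof (rule set_eqI, rule iffI)
    fix p assume "p \<in> mv a b D sx sy ` {0..T}"
    then obtain t where t: "0 \<le> t" "t \<le> T" and p: "p = mv a b D sx sy t" by auto
    show "p \<in> closed_segment a (fst a, snd b) \<union> closed_segment (fst a, snd b) b"
    proof (cases "t \<le> sx")
      case True
      then have "lam D sx t = 0" using D lam_0 by blast
      then have "p = (fst a + lam D sy t * (snd (fst a, snd b) - snd a) * 0, snd a + lam D sy t * (snd b - snd a))"
        using p by (simp add: mv_def algebra_simps)
      then show ?thesis unfolding seg_param using lam_bounds[of D sy t] by auto
    next
      case False
      then have "lam D sy t = 1" using D s lam_1 by simp
      then have "p = (fst a + lam D sx t * (fst b - fst a), snd b + lam D sx t * (snd b - snd b))"
        using p by (simp add: mv_def algebra_simps)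
      then show ?thesis unfolding seg_param using lam_bounds[of D sx t] by auto
    qed
  next
    fix p assume "p \<in> closed_segment a (fst a, snd b) \<union> closed_segment (fst a, snd b) b"
    then show "p \<in> mv a b D sx sy ` {0..T}"
    proof
      assume "p \<in> closed_segment a (fst a, snd b)"
      then obtain u where u: "0 \<le> u" "u \<le> 1" "p = (fst a, snd a + u * (snd b - snd a))"
        unfolding seg_param by auto
      let ?t = "sy + u * D"
      have "u * D \<le> D" using u D by (simp add: mult_left_le_one_le)
      moreover have "0 \<le> u * D" using u D by simp
      ultimately have "?t \<in> {0..T}" "?t \<le> sx" using u D s by (simp_all, linarith+)
      moreover have "mv a b D sx sy ?t = p"
        using u D \<open>?t \<le> sx\<close> lam_at[of D u sy] lam_0[of D ?t sx] by (simp add: mv_def)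
      ultimately show ?thesis by (metis image_eqI)
    next
      assume "p \<in> closed_segment (fst a, snd b) b"
      then obtain u where u: "0 \<le> u" "u \<le> 1" "p = (fst a + u * (fst b - fst a), snd b)"
        unfolding seg_param by auto
      let ?t = "sx + u * D"
      have "u * D \<le> D" using u D by (simp add: mult_left_le_one_le)
      moreover have "0 \<le> u * D" using u D by simp
      ultimately have "?t \<in> {0..T}" "sy + D \<le> ?t" using u D s by (simp_all, linarith+)
      moreover have "mv a b D sx sy ?t = p"
        using u D \<open>sy + D \<le> ?t\<close> lam_at[of D u sx] lam_1[of D sy ?t] by (simp add: mv_def)
      ultimately show ?thesis by (metis image_eqI)
    qed
  qed
qed

lemma traj_xfirst:
  assumes D: "D > 0" "l1dist a b \<le> D" and s: "0 \<le> sx" "sx + D \<le> sy" "sy + D \<le> T"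
  shows "trajectory (mv a b D sx sy) a b 0 T (remdups_adj [a, (fst b, snd a), b])"
proof (rule traj_common)
  show "mv a b D sx sy 0 = a" using D s by (simp add: mv_def lam_0)
  show "mv a b D sx sy T = b" using D s by (simp add: mv_def lam_1)
  show "0 \<le> T" using D s by simp
  show "l1dist (mv a b D sx sy s) (mv a b D sx sy t) \<le> \<bar>s - t\<bar>" for s t
    using mv_lip D by blast
  show "mv a b D sx sy ` {0..T} = closed_segment a (fst b, snd a) \<union> closed_segment (fst b, snd a) b"
  proof (rule set_eqI, rule iffI)
    fix p assume "p \<in> mv a b D sx sy ` {0..T}"
    then obtain t where t: "0 \<le> t" "t \<le> T" and p: "p = mv a b D sx sy t" by auto
    show "p \<in> closed_segment a (fst b, snd a) \<union> closed_segment (fst b, snd a) b"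
    proof (cases "t \<le> sy")
      case True
      then have "lam D sy t = 0" using D lam_0 by blast
      then have "p = (fst a + lam D sx t * (fst b - fst a), snd a + lam D sx t * (snd a - snd a))"
        using p by (simp add: mv_def algebra_simps)
      then show ?thesis unfolding seg_param using lam_bounds[of D sx t] by auto
    next
      case False
      then have "lam D sx t = 1" using D s lam_1 by simp
      then have "p = (fst b + lam D sy t * (fst b - fst b), snd a + lam D sy t * (snd b - snd a))"
        using p by (simp add: mv_def algebra_simps)
      then show ?thesis unfolding seg_param using lam_bounds[of D sy t] by auto
    qed
  next
    fix p assume "p \<in> closed_segment a (fst b, snd a) \<union> closed_segment (fst b, snd a) b"
    then show "p \<in> mv a b D sx sy ` {0..T}"
    proof
      assume "p \<in> closed_segment a (fst b, snd a)"
      then obtain u where u: "0 \<le> u" "u \<le> 1" "p = (fst a + u * (fst b - fst a), snd a)"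
        unfolding seg_param by auto
      let ?t = "sx + u * D"
      have "u * D \<le> D" using u D by (simp add: mult_left_le_one_le)
      moreover have "0 \<le> u * D" using u D by simp
      ultimately have "?t \<in> {0..T}" "?t \<le> sy" using u D s by (simp_all, linarith+)
      moreover have "mv a b D sx sy ?t = p"
        using u D \<open>?t \<le> sy\<close> lam_at[of D u sx] lam_0[of D ?t sy] by (simp add: mv_def)
      ultimately show ?thesis by (metis image_eqI)
    next
      assume "p \<in> closed_segment (fst b, snd a) b"
      then obtain u where u: "0 \<le> u" "u \<le> 1" "p = (fst b, snd a + u * (snd b - snd a))"
        unfolding seg_param by auto
      let ?t = "sy + u * D"
      have "u * D \<le> D" using u D by (simp add: mult_left_le_one_le)
      moreover have "0 \<le> u * D" using u D by simp
      ultimately have "?t \<in> {0..T}" "sx + D \<le> ?t" using u D s by (simp_all, linarith+)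
      moreover have "mv a b D sx sy ?t = p"
        using u D \<open>sx + D \<le> ?t\<close> lam_at[of D u sy] lam_1[of D sx ?t] by (simp add: mv_def)
      ultimately show ?thesis by (metis image_eqI)
    qed
  qed
qed

lemma conv1: "0 \<le> (l::real) \<Longrightarrow> l \<le> 1 \<Longrightarrow> 1 \<le> X \<Longrightarrow> 1 \<le> Y \<Longrightarrow> 1 \<le> (1 - l) * X + l * Y"
proof -
  assume a: "0 \<le> l" "l \<le> 1" "1 \<le> X" "1 \<le> Y"
  have "(1 - l) * 1 + l * 1 \<le> (1 - l) * X + l * Y" using a by (intro add_mono mult_left_mono) auto
  then show ?thesis by simp
qed

lemma sep_lemma:
  fixes \<sigma> u1 v1 u2 v2 l1 l2 :: real
  assumes h: "\<sigma> * (u1 - u2) \<ge> 1" "\<sigma> * (v1 - v2) \<ge> 1" "\<sigma> * (v1 - u2) \<ge> 1"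
    and l: "0 \<le> l1" "l1 \<le> 1" "0 \<le> l2" "l2 \<le> 1" and c: "l2 = 0 \<or> l1 = 1"
  shows "\<sigma> * ((u1 + (v1 - u1) * l1) - (u2 + (v2 - u2) * l2)) \<ge> 1"
  using c
proof
  assume l2: "l2 = 0"
  have e: "\<sigma> * ((u1 + (v1 - u1) * l1) - (u2 + (v2 - u2) * l2)) = (1 - l1) * (\<sigma> * (u1 - u2)) + l1 * (\<sigma> * (v1 - u2))"
    using l2 by (simp add: algebra_simps)
  show ?thesis unfolding e using h l by (intro conv1) auto
next
  assume l1: "l1 = 1"
  have e: "\<sigma> * ((u1 + (v1 - u1) * l1) - (u2 + (v2 - u2) * l2)) = (1 - l2) * (\<sigma> * (v1 - u2)) + l2 * (\<sigma> * (v1 - v2))"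
    using l1 by (simp add: algebra_simps)
  show ?thesis unfolding e using h l by (intro conv1) auto
qed

lemma sigma_abs: "\<sigma> = 1 \<or> \<sigma> = -1 \<Longrightarrow> \<sigma> * (x::real) \<le> \<bar>x\<bar>"
  by auto

lemma l1dist_nonneg: "0 \<le> l1dist p q"
  unfolding l1dist_def by simp

lemma len_corner: "l1dist a (fst a, snd b) + l1dist (fst a, snd b) b = l1dist a b"
  "l1dist a (fst b, snd a) + l1dist (fst b, snd a) b = l1dist a b"
  unfolding l1dist_def by auto

lemma fst_mv: "fst (mv a b D sx sy t) = fst a + (fst b - fst a) * lam D sx t"
  and snd_mv: "snd (mv a b D sx sy t) = snd a + (snd b - snd a) * lam D sy t"
  by (simp_all add: mv_def)

lemma feas_x:
  assumes "\<sigma> = 1 \<or> \<sigma> = -1" "\<And>t. \<sigma> * (fst (m1 t) - fst (m2 t)) \<ge> 1"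
  shows "feasible m1 m2 t0 t1"
  unfolding feasible_def F2_def linfdist_def
  using assms sigma_abs[OF assms(1)] by (smt (verit) case_prodI mem_Collect_eq)

lemma feas_y:
  assumes "\<sigma> = 1 \<or> \<sigma> = -1" "\<And>t. \<sigma> * (snd (m1 t) - snd (m2 t)) \<ge> 1"
  shows "feasible m1 m2 t0 t1"
  unfolding feasible_def F2_def linfdist_def
  using assms sigma_abs[OF assms(1)] by (smt (verit) case_prodI mem_Collect_eq)

lemma xsep:
  assumes sg: "\<sigma> = 1 \<or> \<sigma> = -1" and h: "\<sigma> * (fst a1 - fst a2) \<ge> 1" "\<sigma> * (fst b1 - fst b2) \<ge> 1"
  shows "\<exists>t0 t1 m1 m2 ps1 ps2.
           trajectory m1 a1 b1 t0 t1 ps1 \<and>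
           trajectory m2 a2 b2 t0 t1 ps2 \<and>
           feasible m1 m2 t0 t1 \<and>
           chain_len ps1 + chain_len ps2 = l1dist a1 b1 + l1dist a2 b2 \<and>
           turns ps1 \<le> 1 \<and> turns ps2 \<le> 1"
proof -
  define D where "D = l1dist a1 b1 + l1dist a2 b2 + 1"
  have D: "D > 0" "l1dist a1 b1 \<le> D" "l1dist a2 b2 \<le> D"
    unfolding D_def using l1dist_nonneg[of a1 b1] l1dist_nonneg[of a2 b2] by auto
  have gen: ?thesis if s: "D \<le> sx1" "sx1 \<le> 2 * D" "D \<le> sx2" "sx2 \<le> 2 * D"
     and f: "\<And>t. \<sigma> * (fst (mv a1 b1 D sx1 0 t) - fst (mv a2 b2 D sx2 0 t)) \<ge> 1" for sx1 sx2
  proof (intro exI conjI)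
    show "trajectory (mv a1 b1 D sx1 0) a1 b1 0 (3 * D) (remdups_adj [a1, (fst a1, snd b1), b1])"
      using s D by (intro traj_yfirst) auto
    show "trajectory (mv a2 b2 D sx2 0) a2 b2 0 (3 * D) (remdups_adj [a2, (fst a2, snd b2), b2])"
      using s D by (intro traj_yfirst) auto
    show "feasible (mv a1 b1 D sx1 0) (mv a2 b2 D sx2 0) 0 (3 * D)"
      using feas_x[OF sg f] .
    show "chain_len (remdups_adj [a1, (fst a1, snd b1), b1]) + chain_len (remdups_adj [a2, (fst a2, snd b2), b2])
      = l1dist a1 b1 + l1dist a2 b2"
      by (simp only: chain3_len len_corner)
  qed (rule chain3_turns)+
  show ?thesis
  proof (cases "\<sigma> * (fst b1 - fst a2) \<ge> 1")
    case True
    show ?thesis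
    proof (rule gen[of D "2 * D"])
      fix t
      have "lam D (2 * D) t = 0 \<or> lam D D t = 1"
        using D by (cases "t \<le> 2 * D") (auto intro: lam_0 lam_1)
      then show "\<sigma> * (fst (mv a1 b1 D D 0 t) - fst (mv a2 b2 D (2 * D) 0 t)) \<ge> 1"
        unfolding fst_mv using h True lam_bounds by (intro sep_lemma) auto
    qed (use D in auto)
  next
    case False
    then have F: "(- \<sigma>) * (fst b2 - fst a1) \<ge> 1" using h by (simp add: algebra_simps)
    show ?thesis
    proof (rule gen[of "2 * D" D])
      fix t
      have "lam D (2 * D) t = 0 \<or> lam D D t = 1"
        using D by (cases "t \<le> 2 * D") (auto intro: lam_0 lam_1)
      then have "(- \<sigma>) * (fst (mv a2 b2 D D 0 t) - fst (mv a1 b1 D (2 * D) 0 t)) \<ge> 1"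
        unfolding fst_mv using h F lam_bounds by (intro sep_lemma) (auto simp: algebra_simps)
      then show "\<sigma> * (fst (mv a1 b1 D (2 * D) 0 t) - fst (mv a2 b2 D D 0 t)) \<ge> 1"
        by (simp add: algebra_simps)
    qed (use D in auto)
  qed
qed

lemma ysep:
  assumes sg: "\<sigma> = 1 \<or> \<sigma> = -1" and h: "\<sigma> * (snd a1 - snd a2) \<ge> 1" "\<sigma> * (snd b1 - snd b2) \<ge> 1"
  shows "\<exists>t0 t1 m1 m2 ps1 ps2.
           trajectory m1 a1 b1 t0 t1 ps1 \<and>
           trajectory m2 a2 b2 t0 t1 ps2 \<and>
           feasible m1 m2 t0 t1 \<and>
           chain_len ps1 + chain_len ps2 = l1dist a1 b1 + l1dist a2 b2 \<and>
           turns ps1 \<le> 1 \<and> turns ps2 \<le> 1"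
proof -
  define D where "D = l1dist a1 b1 + l1dist a2 b2 + 1"
  have D: "D > 0" "l1dist a1 b1 \<le> D" "l1dist a2 b2 \<le> D"
    unfolding D_def using l1dist_nonneg[of a1 b1] l1dist_nonneg[of a2 b2] by auto
  have gen: ?thesis if s: "D \<le> SY1" "SY1 \<le> 2 * D" "D \<le> SY2" "SY2 \<le> 2 * D"
     and f: "\<And>t. \<sigma> * (snd (mv a1 b1 D 0 SY1 t) - snd (mv a2 b2 D 0 SY2 t)) \<ge> 1" for SY1 SY2
  proof (intro exI conjI)
    show "trajectory (mv a1 b1 D 0 SY1) a1 b1 0 (3 * D) (remdups_adj [a1, (fst b1, snd a1), b1])"
      using s D by (intro traj_xfirst) auto
    show "trajectory (mv a2 b2 D 0 SY2) a2 b2 0 (3 * D) (remdups_adj [a2, (fst b2, snd a2), b2])"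
      using s D by (intro traj_xfirst) auto
    show "feasible (mv a1 b1 D 0 SY1) (mv a2 b2 D 0 SY2) 0 (3 * D)"
      using feas_y[OF sg f] .
    show "chain_len (remdups_adj [a1, (fst b1, snd a1), b1]) + chain_len (remdups_adj [a2, (fst b2, snd a2), b2])
      = l1dist a1 b1 + l1dist a2 b2"
      by (simp only: chain3_len len_corner)
  qed (rule chain3_turns)+
  show ?thesis
  proof (cases "\<sigma> * (snd b1 - snd a2) \<ge> 1")
    case True
    show ?thesis
    proof (rule gen[of D "2 * D"])
      fix t
      have "lam D (2 * D) t = 0 \<or> lam D D t = 1"
        using D by (cases "t \<le> 2 * D") (auto intro: lam_0 lam_1)
      then show "\<sigma> * (snd (mv a1 b1 D 0 D t) - snd (mv a2 b2 D 0 (2 * D) t)) \<ge> 1"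
        unfolding snd_mv using h True lam_bounds by (intro sep_lemma) auto
    qed (use D in auto)
  next
    case False
    then have F: "(- \<sigma>) * (snd b2 - snd a1) \<ge> 1" using h by (simp add: algebra_simps)
    show ?thesis
    proof (rule gen[of "2 * D" D])
      fix t
      have "lam D (2 * D) t = 0 \<or> lam D D t = 1"
        using D by (cases "t \<le> 2 * D") (auto intro: lam_0 lam_1)
      then have "(- \<sigma>) * (snd (mv a2 b2 D 0 D t) - snd (mv a1 b1 D 0 (2 * D) t)) \<ge> 1"
        unfolding snd_mv using h F lam_bounds by (intro sep_lemma) (auto simp: algebra_simps)
      then show "\<sigma> * (snd (mv a1 b1 D 0 (2 * D) t) - snd (mv a2 b2 D 0 D t)) \<ge> 1"
        by (simp add: algebra_simps)
    qed (use D in auto)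
  qed
qed

theorem corollary3p4:
  fixes A B :: "pt \<times> pt"
  assumes "A \<in> F2" and "B \<in> F2" and "commonly_ordered A B"
  shows "\<exists>t0 t1 m1 m2 ps1 ps2.
           trajectory m1 (fst A) (fst B) t0 t1 ps1 \<and>
           trajectory m2 (snd A) (snd B) t0 t1 ps2 \<and>
           feasible m1 m2 t0 t1 \<and>
           chain_len ps1 + chain_len ps2 = l1dist (fst A) (fst B) + l1dist (snd A) (snd B) \<and>
           turns ps1 \<le> 1 \<and> turns ps2 \<le> 1"
proof -
  obtain a1 a2 where A: "A = (a1, a2)" by (cases A)
  obtain b1 b2 where B: "B = (b1, b2)" by (cases B)
  from assms(3) consider
      "A \<in> F2_right" "B \<in> F2_right" | "A \<in> F2_left" "B \<in> F2_left"
    | "A \<in> F2_up" "B \<in> F2_up" | "A \<in> F2_down" "B \<in> F2_down"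
    unfolding commonly_ordered_def by blast
  then show ?thesis
  proof cases
    case 1
    then show ?thesis unfolding A B F2_right_def using xsep[of 1 a1 a2 b1 b2] by simp
  next
    case 2
    then show ?thesis unfolding A B F2_left_def using xsep[of "-1" a1 a2 b1 b2] by simp
  next
    case 3
    then show ?thesis unfolding A B F2_up_def using ysep[of 1 a1 a2 b1 b2] by simp
  next
    case 4
    then show ?thesis unfolding A B F2_down_def using ysep[of "-1" a1 a2 b1 b2] by simp
  qed
qed

end
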